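(* Let $y\ge 1$ be an integer and $s\ge 0$ an integer. Consider the random walk on $\mathbb{Z}$ starting at $s$ whose steps are independent and equal to $+y$ or $-2$, each with probability $\tfrac12$, stopped at the first time it enters $\{0,1\}$ (if $s\in\{0,1\}$ it is stopped at time $0$). For $j\ge 0$ let $q_j(s)$ be the probability that the walk is eventually absorbed in $\{0,1\}$ having made exactly $j$ steps equal to $-2$, and let $F_s(z)=\sum_{j\ge 0}q_j(s)z^j$. Let $a=a(z)$ and $b=b(z)$ be the two roots of $x^{y+2}-2x^2+z=0$ that tend to $0$ as $z\to 0$ (the "small roots"). Then, for $z$ sufficiently small, $$F_s(z)=\frac{(1-b)\,a^s+(a-1)\,b^s}{a-b}.$$ In particular, for $s=2$ this equals $a+b-ab$.
   Context: For $|z|$ small and positive the polynomial $x^{y+2}-2x^2+z$ has exactly two roots of modulus tending to $0$ as $z\to0$ (both of order $\sqrt{z/2}$). The other $y$ roots stay bounded away from $0$. The right-hand side is symmetric in $a$ and $b$. *)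

theory Defs
  imports "HOL-Analysis.Analysis"
begin

text \<open>A path of the walk is a list of steps: True = step +y, False = step -2.\<close>

definition step_val :: "nat \<Rightarrow> bool \<Rightarrow> int" where
  "step_val y b = (if b then int y else -2)"

definition walk_pos :: "nat \<Rightarrow> nat \<Rightarrow> bool list \<Rightarrow> int" where
  "walk_pos y s xs = int s + sum_list (map (step_val y) xs)"

definition absorbing_path :: "nat \<Rightarrow> nat \<Rightarrow> bool list \<Rightarrow> bool" where
  "absorbing_path y s xs \<longleftrightarrow>
     walk_pos y s xs \<in> {0, 1} \<and>
     (\<forall>i < length xs. walk_pos y s (take i xs) \<notin> {0, 1})"

definition q_prob :: "nat \<Rightarrow> nat \<Rightarrow> nat \<Rightarrow> real" where
  "q_prob y j s = (\<Sum>xs \<in> {xs. absorbing_path y s xs \<and> count_list xs False = j}.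
                     (1/2::real) ^ length xs)"

definition F_gen :: "nat \<Rightarrow> nat \<Rightarrow> complex \<Rightarrow> complex" where
  "F_gen y s z = (\<Sum>j. complex_of_real (q_prob y j s) * z ^ j)"

end

theory Submission
  imports Defs
begin


definition nxt :: "nat \<Rightarrow> nat \<Rightarrow> bool \<Rightarrow> nat" where
  "nxt y s b = (if b then s + y else s - 2)"

definition Tn :: "nat \<Rightarrow> nat \<Rightarrow> nat \<Rightarrow> bool list set" where
  "Tn y s n = {xs. absorbing_path y s xs \<and> length xs \<le> n}"

definition Sv :: "nat \<Rightarrow> nat \<Rightarrow> nat \<Rightarrow> bool list set" where
  "Sv y s n = {xs. length xs = n \<and> (\<forall>i\<le>n. walk_pos y s (take i xs) \<notin> {0,1})}"

definition wt :: "'a::field \<Rightarrow> bool list \<Rightarrow> 'a" where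
  "wt z xs = (1/2)^length xs * z ^ count_list xs False"

lemma wt_Nil[simp]: "wt z [] = 1" by (simp add: wt_def)
lemma wt_Cons: "wt z (b#xs) = (1/2) * (if b then 1 else z) * wt z xs"
  by (simp add: wt_def)

lemma walk_pos_Nil[simp]: "walk_pos y s [] = int s" by (simp add: walk_pos_def)

lemma walk_pos_Cons: "2 \<le> s \<Longrightarrow> walk_pos y s (b#xs) = walk_pos y (nxt y s b) xs"
  by (auto simp: walk_pos_def nxt_def step_val_def of_nat_diff)

lemma walk_pos_take_Suc:
  "2 \<le> s \<Longrightarrow> walk_pos y s (take (Suc i) (b#xs)) = walk_pos y (nxt y s b) (take i xs)"
  by (simp add: walk_pos_Cons)

lemma all_less_Suc_split: "(\<forall>i<Suc n. P i) \<longleftrightarrow> P 0 \<and> (\<forall>i<n. P (Suc i))"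
  using less_Suc_eq_0_disj by auto

lemma all_le_Suc_split: "(\<forall>i\<le>Suc n. P i) \<longleftrightarrow> P 0 \<and> (\<forall>i\<le>n. P (Suc i))"
  by (metis Suc_le_mono le0 not0_implies_Suc)

lemma absorbing_Cons:
  assumes "2 \<le> s"
  shows "absorbing_path y s (b#xs) \<longleftrightarrow> absorbing_path y (nxt y s b) xs"
proof -
  have s01: "int s \<notin> {0,1}" using assms by auto
  show ?thesis
    unfolding absorbing_path_def
    by (simp only: length_Cons all_less_Suc_split walk_pos_take_Suc[OF assms] walk_pos_Cons[OF assms])
       (use assms in auto)
qed

lemma Tn_small: "s < 2 \<Longrightarrow> Tn y s n = {[]}"
proof -
  assume "s < 2"
  then have s01: "int s \<in> {0,1}" by auto
  have "xs = []" if "absorbing_path y s xs" for xs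
  proof (rule ccontr)
    assume "xs \<noteq> []"
    then have "0 < length xs" by simp
    with that have "walk_pos y s (take 0 xs) \<notin> {0,1}" unfolding absorbing_path_def by blast
    with s01 show False by simp
  qed
  moreover have "absorbing_path y s []" using s01 by (simp add: absorbing_path_def)
  ultimately show ?thesis unfolding Tn_def by auto
qed

lemma Sv_small: "s < 2 \<Longrightarrow> Sv y s n = {}"
  unfolding Sv_def by (auto intro!: exI[of _ 0])

lemma Tn_0: "2 \<le> s \<Longrightarrow> Tn y s 0 = {}"
  unfolding Tn_def absorbing_path_def by auto

lemma Sv_0: "2 \<le> s \<Longrightarrow> Sv y s 0 = {[]}"
  unfolding Sv_def by auto

lemma Tn_Cons: "2 \<le> s \<Longrightarrow> (b#xs) \<in> Tn y s (Suc n) \<longleftrightarrow> xs \<in> Tn y (nxt y s b) n"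
  unfolding Tn_def using absorbing_Cons by auto

lemma Sv_Cons: 
  assumes "2 \<le> s" shows "(b#xs) \<in> Sv y s (Suc n) \<longleftrightarrow> xs \<in> Sv y (nxt y s b) n"
proof -
  have s01: "int s \<notin> {0,1}" using assms by auto
  show ?thesis unfolding Sv_def
    by (simp only: length_Cons all_le_Suc_split walk_pos_take_Suc[OF assms] mem_Collect_eq)
       (use assms in auto)
qed

lemma finite_Tn: "finite (Tn y s n)"
  by (rule finite_subset[OF _ finite_lists_length_le[of "UNIV::bool set" n]]) (auto simp: Tn_def)

lemma finite_Sv: "finite (Sv y s n)"
  by (rule finite_subset[OF _ finite_lists_length_eq[of "UNIV::bool set" n]]) (auto simp: Sv_def)

lemma sum_split_Cons:
  assumes "[] \<notin> A" "\<And>b xs. b#xs \<in> A \<longleftrightarrow> xs \<in> B b" "finite (B True)" "finite (B False)"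
  shows "sum f A = sum (\<lambda>xs. f (True#xs)) (B True) + sum (\<lambda>xs. f (False#xs)) (B False)"
proof -
  have A: "A = Cons True ` B True \<union> Cons False ` B False"
  proof (intro set_eqI iffI)
    fix xs assume "xs \<in> A"
    with assms(1) obtain c ys where "xs = c#ys" by (cases xs) auto
    with \<open>xs \<in> A\<close> assms(2) show "xs \<in> Cons True ` B True \<union> Cons False ` B False"
      by (cases c) auto
  next
    fix xs assume "xs \<in> Cons True ` B True \<union> Cons False ` B False"
    with assms(2) show "xs \<in> A" by auto
  qed
  have "sum f A = sum f (Cons True ` B True) + sum f (Cons False ` B False)"
    unfolding A by (rule sum.union_disjoint) (use assms in auto)
  also have "\<dots> = sum (\<lambda>xs. f (True#xs)) (B True) + sum (\<lambda>xs. f (False#xs)) (B False)"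
    by (simp add: sum.reindex)
  finally show ?thesis .
qed

lemma sum_Tn_Suc:
  assumes "2 \<le> s"
  shows "sum f (Tn y s (Suc n)) = sum (\<lambda>xs. f (True#xs)) (Tn y (s+y) n) + sum (\<lambda>xs. f (False#xs)) (Tn y (s-2) n)"
proof -
  have "[] \<notin> Tn y s (Suc n)" using assms unfolding Tn_def absorbing_path_def by auto
  from sum_split_Cons[OF this, of "\<lambda>b. Tn y (nxt y s b) n"] Tn_Cons[OF assms] finite_Tn
  show ?thesis by (simp add: nxt_def)
qed

lemma sum_Sv_Suc:
  assumes "2 \<le> s"
  shows "sum f (Sv y s (Suc n)) = sum (\<lambda>xs. f (True#xs)) (Sv y (s+y) n) + sum (\<lambda>xs. f (False#xs)) (Sv y (s-2) n)"
proof -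
  have "[] \<notin> Sv y s (Suc n)" unfolding Sv_def by auto
  from sum_split_Cons[OF this, of "\<lambda>b. Sv y (nxt y s b) n"] Sv_Cons[OF assms] finite_Sv
  show ?thesis by (simp add: nxt_def)
qed



lemma claim:
  fixes r z :: "'a::field_char_0"
  assumes root: "r^(y+2) - 2*r^2 + z = 0"
  shows "(\<Sum>xs\<in>Tn y s n. wt z xs * r^nat(walk_pos y s xs)) +
         (\<Sum>xs\<in>Sv y s n. wt z xs * r^nat(walk_pos y s xs)) = r^s"
proof (induction n arbitrary: s)
  case 0
  show ?case
  proof (cases "s < 2")
    case True thus ?thesis by (simp add: Tn_small Sv_small)
  next
    case False thus ?thesis by (simp add: Tn_0 Sv_0)
  qed
next
  case (Suc n)
  show ?case
  proof (cases "s < 2")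
    case True thus ?thesis by (simp add: Tn_small Sv_small)
  next
    case False
    then have s2: "2 \<le> s" by simp
    let ?f = "\<lambda>s xs. wt z xs * r^nat(walk_pos y s xs)"
    have eT: "?f s (True#xs) = (1/2) * ?f (s+y) xs" for xs
      using walk_pos_Cons[OF s2, where b=True] by (simp add: wt_Cons nxt_def)
    have eF: "?f s (False#xs) = (z/2) * ?f (s-2) xs" for xs
      using walk_pos_Cons[OF s2, where b=False] by (simp add: wt_Cons nxt_def)
    have "(\<Sum>xs\<in>Tn y s (Suc n). ?f s xs) + (\<Sum>xs\<in>Sv y s (Suc n). ?f s xs)
        = (1/2) * ((\<Sum>xs\<in>Tn y (s+y) n. ?f (s+y) xs) + (\<Sum>xs\<in>Sv y (s+y) n. ?f (s+y) xs))
        + (z/2) * ((\<Sum>xs\<in>Tn y (s-2) n. ?f (s-2) xs) + (\<Sum>xs\<in>Sv y (s-2) n. ?f (s-2) xs))"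
      unfolding sum_Tn_Suc[OF s2] sum_Sv_Suc[OF s2] eT eF
      by (simp add: sum_distrib_left algebra_simps)
    also have "\<dots> = (1/2) * r^(s+y) + (z/2) * r^(s-2)" using Suc.IH by simp
    also have "\<dots> = r^s"
    proof -
      have "s + y = (s-2) + (y+2)" using s2 by simp
      then have "r^(s+y) = r^(s-2) * r^(y+2)" by (metis power_add)
      moreover have "s = (s-2) + 2" using s2 by simp
      then have "r^s = r^(s-2) * r^2" by (metis power_add)
      moreover have "r^(y+2) = 2*r^2 - z" using root by (simp add: algebra_simps eq_diff_eq)
      ultimately show ?thesis
        by (simp only:) (simp add: algebra_simps)
    qed
    finally show ?thesis .
  qed
qed

lemma bound:
  fixes r z :: complex
  assumes "norm r \<le> 1"
  shows "norm (\<Sum>xs\<in>Sv y s n. wt z xs * r^nat(walk_pos y s xs)) \<le> ((1 + norm z)/2)^n"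
proof (induction n arbitrary: s)
  case 0
  show ?case
  proof (cases "s < 2")
    case True thus ?thesis by (simp add: Sv_small)
  next
    case False thus ?thesis using assms by (simp add: Sv_0 norm_power power_le_one)
  qed
next
  case (Suc n)
  show ?case
  proof (cases "s < 2")
    case True thus ?thesis by (simp add: Sv_small)
  next
    case False
    then have s2: "2 \<le> s" by simp
    let ?f = "\<lambda>s xs. wt z xs * r^nat(walk_pos y s xs)"
    have eT: "?f s (True#xs) = (1/2) * ?f (s+y) xs" for xs
      using walk_pos_Cons[OF s2, where b=True] by (simp add: wt_Cons nxt_def)
    have eF: "?f s (False#xs) = (z/2) * ?f (s-2) xs" for xs
      using walk_pos_Cons[OF s2, where b=False] by (simp add: wt_Cons nxt_def)
    have "(\<Sum>xs\<in>Sv y s (Suc n). ?f s xs)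
        = (1/2) * (\<Sum>xs\<in>Sv y (s+y) n. ?f (s+y) xs) + (z/2) * (\<Sum>xs\<in>Sv y (s-2) n. ?f (s-2) xs)"
      unfolding sum_Sv_Suc[OF s2] eT eF by (simp add: sum_distrib_left)
    also have "norm \<dots> \<le> (1/2) * ((1 + norm z)/2)^n + (norm z/2) * ((1 + norm z)/2)^n"
      by (rule order_trans[OF norm_triangle_ineq])
         (auto simp: norm_mult intro!: add_mono mult_left_mono Suc.IH)
    also have "\<dots> = ((1 + norm z)/2)^Suc n" by (simp add: field_simps)
    finally show ?thesis .
  qed
qed

lemma prob_bound: "(\<Sum>xs\<in>Tn y s n. (1/2::real)^length xs) \<le> 1"
proof -
  have "(\<Sum>xs\<in>Tn y s n. wt (1::real) xs * 1^nat(walk_pos y s xs)) +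
         (\<Sum>xs\<in>Sv y s n. wt (1::real) xs * 1^nat(walk_pos y s xs)) = 1^s"
    by (rule claim) simp
  moreover have "(\<Sum>xs\<in>Sv y s n. wt (1::real) xs * 1^nat(walk_pos y s xs)) \<ge> 0"
    by (rule sum_nonneg) (simp add: wt_def)
  ultimately show ?thesis by (simp add: wt_def)
qed

lemma sum_steps: "sum_list (map (step_val y) xs) = int y * int (count_list xs True) - 2 * int (count_list xs False)"
  by (induction xs) (auto simp: step_val_def algebra_simps)

lemma length_count: "length xs = count_list xs True + count_list xs False"
  by (induction xs) auto

lemma length_bound:
  assumes "y \<ge> 1" "absorbing_path y s xs"
  shows "length xs \<le> 3 * count_list xs False + 1"
proof -
  have "walk_pos y s xs \<le> 1" using assms(2) unfolding absorbing_path_def by auto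
  then have h: "int s + int y * int (count_list xs True) - 2 * int (count_list xs False) \<le> 1"
    unfolding walk_pos_def sum_steps by simp
  have "int (count_list xs True) \<le> int y * int (count_list xs True)"
    using assms(1) by (simp add: mult_le_cancel_right1 del: of_nat_mult)
  with h have "int (count_list xs True) \<le> 2 * int (count_list xs False) + 1" by linarith
  then show ?thesis using length_count[of xs] by linarith
qed



lemma main_pt:
  fixes a b z :: complex
  assumes y1: "y \<ge> 1" and ra: "a^(y+2) - 2*a^2 + z = 0" and rb: "b^(y+2) - 2*b^2 + z = 0"
    and ab: "a \<noteq> b" and na: "norm a \<le> 1" and nb: "norm b \<le> 1" and nz: "norm z < 1"
  shows "F_gen y s z = ((1-b)*a^s + (a-1)*b^s)/(a-b)"
proof -
  define R where "R = ((1-b)*a^s + (a-1)*b^s)/(a-b)"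
  define B where "B n = (\<Sum>xs\<in>Tn y s n. wt z xs)" for n
  define E where "E n = (\<Sum>xs\<in>Tn y s n. wt z xs * of_nat (nat (walk_pos y s xs)))" for n
  define S where "S r n = (\<Sum>xs\<in>Sv y s n. wt z xs * r^nat(walk_pos y s xs))" for r n
  have split: "(\<Sum>xs\<in>Tn y s n. wt z xs * r^nat(walk_pos y s xs)) = B n + (r-1) * E n" for r n
  proof -
    have "wt z xs * r^nat(walk_pos y s xs) = wt z xs + (r-1) * (wt z xs * of_nat (nat (walk_pos y s xs)))"
      if "xs \<in> Tn y s n" for xs
    proof -
      from that have "walk_pos y s xs \<in> {0,1}" unfolding Tn_def absorbing_path_def by auto
      then show ?thesis by (auto simp: algebra_simps)
    qed
    then show ?thesis unfolding B_def E_def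
      by (simp add: sum.distrib sum_distrib_left cong: sum.cong)
  qed
  have eq: "B n + (r-1) * E n + S r n = r^s" if "r^(y+2) - 2*r^2 + z = 0" for r n
    using claim[OF that, of s n] unfolding split S_def by simp
  have Bn: "B n = ((1-b)*(a^s - S a n) + (a-1)*(b^s - S b n))/(a-b)" for n
  proof -
    have "(a-b) * B n = (1-b)*(B n + (a-1) * E n) + (a-1)*(B n + (b-1) * E n)"
      by (simp add: algebra_simps)
    also have "\<dots> = (1-b)*(a^s - S a n) + (a-1)*(b^s - S b n)"
    proof -
      have "B n + (a-1) * E n = a^s - S a n" "B n + (b-1) * E n = b^s - S b n"
        using eq[OF ra, of n] eq[OF rb, of n] by (simp_all add: eq_diff_eq)
      then show ?thesis by simp
    qed
    finally show ?thesis using ab by (simp add: eq_divide_eq mult.commute)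
  qed
  have c1: "norm ((1 + norm z)/2) < 1" using nz by simp
  have S0: "(\<lambda>n. S r n) \<longlonglongrightarrow> 0" if "norm r \<le> 1" for r
    by (rule Lim_null_comparison[OF _ LIMSEQ_power_zero[OF c1]])
       (use bound[OF that] in \<open>auto simp: S_def\<close>)
  have "(\<lambda>n. ((1-b)*(a^s - S a n) + (a-1)*(b^s - S b n))/(a-b)) \<longlonglongrightarrow>
        ((1-b)*(a^s - 0) + (a-1)*(b^s - 0))/(a-b)"
    by (intro tendsto_intros S0 na nb) (use ab in auto)
  then have BR: "B \<longlonglongrightarrow> R" unfolding R_def Bn[abs_def] by simp
  define Q where "Q j = {xs. absorbing_path y s xs \<and> count_list xs False = j}" for j
  define D where "D m = {xs. absorbing_path y s xs \<and> count_list xs False < m}" for m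
  define C where "C m = (\<Sum>xs\<in>D m. wt z xs)" for m
  have DT: "D m \<subseteq> Tn y s (3*m+1)" for m
    unfolding D_def Tn_def using length_bound[OF y1] by fastforce
  have QT: "Q j \<subseteq> Tn y s (3*j+1)" for j
    unfolding Q_def Tn_def using length_bound[OF y1] by fastforce
  have finD: "finite (D m)" for m using finite_subset[OF DT finite_Tn] .
  have finQ: "finite (Q j)" for j using finite_subset[OF QT finite_Tn] .
  have qz: "complex_of_real (q_prob y j s) * z^j = (\<Sum>xs\<in>Q j. wt z xs)" for j
  proof -
    have "complex_of_real (q_prob y j s) * z^j = (\<Sum>xs\<in>Q j. (1/2)^length xs * z^j)"
      unfolding q_prob_def Q_def[symmetric] by (simp add: sum_distrib_right)
    also have "\<dots> = (\<Sum>xs\<in>Q j. wt z xs)"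
      by (rule sum.cong) (auto simp: Q_def wt_def)
    finally show ?thesis .
  qed
  have partial: "(\<Sum>j<m. complex_of_real (q_prob y j s) * z^j) = C m" for m
  proof (induction m)
    case 0 show ?case by (simp add: C_def D_def)
  next
    case (Suc m)
    have "D (Suc m) = D m \<union> Q m" "D m \<inter> Q m = {}" unfolding D_def Q_def by auto
    then have "C (Suc m) = C m + (\<Sum>xs\<in>Q m. wt z xs)"
      unfolding C_def by (simp add: sum.union_disjoint finD finQ)
    then show ?case using Suc.IH qz by simp
  qed
  have diff: "norm (B (3*m+1) - C m) \<le> norm z ^ m" for m
  proof -
    have "B (3*m+1) = (\<Sum>xs\<in>Tn y s (3*m+1) - D m. wt z xs) + C m"
      unfolding B_def C_def by (rule sum.subset_diff[OF DT finite_Tn])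
    then have "norm (B (3*m+1) - C m) = norm (\<Sum>xs\<in>Tn y s (3*m+1) - D m. wt z xs)" by simp
    also have "\<dots> \<le> (\<Sum>xs\<in>Tn y s (3*m+1) - D m. norm (wt z xs))" by (rule norm_sum)
    also have "\<dots> \<le> (\<Sum>xs\<in>Tn y s (3*m+1) - D m. (1/2)^length xs * norm z ^ m)"
    proof (rule sum_mono)
      fix xs assume "xs \<in> Tn y s (3*m+1) - D m"
      then have "m \<le> count_list xs False" unfolding Tn_def D_def by auto
      then have "norm z ^ count_list xs False \<le> norm z ^ m"
        using nz by (intro power_decreasing) auto
      then show "norm (wt z xs) \<le> (1/2)^length xs * norm z ^ m"
        by (simp add: wt_def norm_mult norm_power norm_divide)
    qed
    also have "\<dots> \<le> (\<Sum>xs\<in>Tn y s (3*m+1). (1/2)^length xs * norm z ^ m)"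
      by (rule sum_mono2[OF finite_Tn]) auto
    also have "\<dots> = (\<Sum>xs\<in>Tn y s (3*m+1). (1/2::real)^length xs) * norm z ^ m"
      by (simp add: sum_distrib_right)
    also have "\<dots> \<le> 1 * norm z ^ m"
      by (rule mult_right_mono[OF prob_bound]) simp
    finally show ?thesis by simp
  qed
  have sm: "strict_mono (\<lambda>m::nat. 3*m+1)" by (rule strict_monoI) simp
  have B3: "(\<lambda>m. B (3*m+1)) \<longlonglongrightarrow> R"
    using LIMSEQ_subseq_LIMSEQ[OF BR sm] by (simp add: o_def)
  have nz1: "norm (norm z) < 1" using nz by simp
  have D0: "(\<lambda>m. B (3*m+1) - C m) \<longlonglongrightarrow> 0"
    by (rule Lim_null_comparison[OF _ LIMSEQ_power_zero[OF nz1]]) (use diff in auto)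
  have "(\<lambda>m. B (3*m+1) - (B (3*m+1) - C m)) \<longlonglongrightarrow> R - 0"
    by (intro tendsto_intros B3 D0)
  then have "C \<longlonglongrightarrow> R" by simp
  then have "(\<lambda>j. complex_of_real (q_prob y j s) * z^j) sums R"
    unfolding sums_def partial .
  then show ?thesis unfolding F_gen_def R_def by (rule sums_unique[symmetric])
qed


theorem mainTheorem3:
  fixes y s :: nat and a b :: "complex \<Rightarrow> complex"
  assumes "y \<ge> 1"
    and roots: "\<forall>\<^sub>F z in at 0. a z ^ (y + 2) - 2 * a z ^ 2 + z = 0 \<and>
                               b z ^ (y + 2) - 2 * b z ^ 2 + z = 0 \<and> a z \<noteq> b z"
    and "(a \<longlongrightarrow> 0) (at 0)" and "(b \<longlongrightarrow> 0) (at 0)"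
  shows "(\<forall>\<^sub>F z in at 0. F_gen y s z = ((1 - b z) * a z ^ s + (a z - 1) * b z ^ s) / (a z - b z))
       \<and> (\<forall>\<^sub>F z in at 0. F_gen y 2 z = a z + b z - a z * b z)"
proof -
  have ea: "\<forall>\<^sub>F z in at 0. norm (a z) < 1"
    using order_tendstoD(2)[OF tendsto_norm_zero[OF assms(3)]] by simp
  have eb: "\<forall>\<^sub>F z in at 0. norm (b z) < 1"
    using order_tendstoD(2)[OF tendsto_norm_zero[OF assms(4)]] by simp
  have ez: "\<forall>\<^sub>F z::complex in at 0. norm z < 1"
    using order_tendstoD(2)[OF tendsto_norm_zero[OF tendsto_ident_at[of 0 UNIV]], of 1] by simp
  have ev: "\<forall>\<^sub>F z in at 0. F_gen y t z = ((1 - b z) * a z ^ t + (a z - 1) * b z ^ t) / (a z - b z)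
                \<and> a z \<noteq> b z" for t
    using roots ea eb ez
  proof eventually_elim
    case (elim z)
    then show ?case using main_pt[OF assms(1), of "a z" z "b z" t] by auto
  qed
  have "\<forall>\<^sub>F z in at 0. F_gen y 2 z = a z + b z - a z * b z"
    using ev[of 2]
  proof eventually_elim
    case (elim z)
    then have "a z - b z \<noteq> 0" by simp
    with elim show ?case by (simp add: field_simps power2_eq_square)
  qed
  moreover have "\<forall>\<^sub>F z in at 0. F_gen y s z = ((1 - b z) * a z ^ s + (a z - 1) * b z ^ s) / (a z - b z)"
    using ev[of s] by (rule eventually_mono) simp
  ultimately show ?thesis by simp
qed

end
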